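(* Let $(\mathbf{S},\leq,\land,\mid,\mathsf{U})$ be a specification theory as described in the context, and assume moreover that parallel composition is idempotent in the sense that $A\leq A\mid A$ for all $A\in\mathbf{S}$. Then for all $A,B,C\in\mathbf{S}$ we have $(A\mid B)\mid C\leq A\mid(B\mid C)$, and consequently also $A\mid(B\mid C)\leq(A\mid B)\mid C$.
   Context: A specification theory consists of a set $\mathbf{S}$ (the specifications) with: a binary relation $\leq\ \subseteq \mathbf{S}\times\mathbf{S}$ (refinement) which is a preorder (reflexive and transitive); a universal specification $\mathsf{U}\in\mathbf{S}$ with $A\leq\mathsf{U}$ for all $A\in\mathbf{S}$; a total binary operation $\land:\mathbf{S}\times\mathbf{S}\to\mathbf{S}$ (conjunction) such that for all $A,B,C\in\mathbf{S}$: $A\land B\leq B\land A$, $A\land B\leq A$, $A\land B\leq B$, and if $C\leq A$ and $C\leq B$ then $C\leq A\land B$ (i.e. $\land$ is a greatest lower bound); a total binary operation $\mid:\mathbf{S}\times\mathbf{S}\to\mathbf{S}$ (parallel composition) such that for all $A,B,C\in\mathbf{S}$: $A\mid B\leq B\mid A$ (commutativity), and $A\leq B$ implies $A\mid C\leq B\mid C$ (precongruence); and moreover $A\mid\mathsf{U}\leq A$ for all $A\in\mathbf{S}$. *)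

theory Defs
  imports Main
begin

text \<open>A specification theory: the set of specifications is the type 'a;
  ref = refinement, U = universal specification, cnj = conjunction,
  par = parallel composition.\<close>
definition spec_theory ::
  "('a \<Rightarrow> 'a \<Rightarrow> bool) \<Rightarrow> 'a \<Rightarrow> ('a \<Rightarrow> 'a \<Rightarrow> 'a) \<Rightarrow> ('a \<Rightarrow> 'a \<Rightarrow> 'a) \<Rightarrow> bool" where
  "spec_theory ref U cnj par \<longleftrightarrow>
     (\<forall>A. ref A A) \<and>
     (\<forall>A B C. ref A B \<longrightarrow> ref B C \<longrightarrow> ref A C) \<and>
     (\<forall>A. ref A U) \<and>
     (\<forall>A B. ref (cnj A B) (cnj B A)) \<and>
     (\<forall>A B. ref (cnj A B) A) \<and>
     (\<forall>A B. ref (cnj A B) B) \<and>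
     (\<forall>A B C. ref C A \<longrightarrow> ref C B \<longrightarrow> ref C (cnj A B)) \<and>
     (\<forall>A B. ref (par A B) (par B A)) \<and>
     (\<forall>A B C. ref A B \<longrightarrow> ref (par A C) (par B C)) \<and>
     (\<forall>A. ref (par A U) A)"

end

theory Submission
  imports Defs
begin

theorem theorem6:
  fixes ref :: "'a \<Rightarrow> 'a \<Rightarrow> bool" and U :: 'a
    and cnj par :: "'a \<Rightarrow> 'a \<Rightarrow> 'a"
  assumes "spec_theory ref U cnj par"
    and "\<And>A. ref A (par A A)"
  shows "\<forall>A B C. ref (par (par A B) C) (par A (par B C))
           \<and> ref (par A (par B C)) (par (par A B) C)"
proof -
  note st = assms(1)[unfolded spec_theory_def]
  have tr: "\<And>x y z. ref x y \<Longrightarrow> ref y z \<Longrightarrow> ref x z" using st by blast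
  have com: "\<And>x y. ref (par x y) (par y x)" using st by blast
  have ml: "\<And>x y z. ref x y \<Longrightarrow> ref (par x z) (par y z)" using st by blast
  have mr: "\<And>x y z. ref x y \<Longrightarrow> ref (par z x) (par z y)"
    by (rule tr[OF com tr[OF ml com]])
  have m2: "\<And>x x' y y'. ref x x' \<Longrightarrow> ref y y' \<Longrightarrow> ref (par x y) (par x' y')"
    by (rule tr[OF ml mr])
  have pl: "\<And>x y. ref (par x y) x"
  proof -
    fix x y
    have "ref y U" using st by blast
    then have "ref (par x y) (par x U)" by (rule mr)
    moreover have "ref (par x U) x" using st by blast
    ultimately show "ref (par x y) x" by (rule tr)
  qed
  have pr: "\<And>x y. ref (par x y) y" by (rule tr[OF com pl])
  have glb: "\<And>d x y. ref d x \<Longrightarrow> ref d y \<Longrightarrow> ref d (par x y)"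
    by (rule tr[OF assms(2) m2])
  have assoc: "\<And>A B C. ref (par (par A B) C) (par A (par B C))"
  proof -
    fix A B C
    let ?D = "par (par A B) C"
    have a: "ref ?D A" by (rule tr[OF pl pl])
    have b: "ref ?D B" by (rule tr[OF pl pr])
    have c: "ref ?D C" by (rule pr)
    show "ref ?D (par A (par B C))" by (rule glb[OF a glb[OF b c]])
  qed
  have assoc2: "\<And>A B C. ref (par A (par B C)) (par (par A B) C)"
  proof -
    fix A B C
    let ?D = "par A (par B C)"
    have a: "ref ?D A" by (rule pl)
    have b: "ref ?D B" by (rule tr[OF pr pl])
    have c: "ref ?D C" by (rule tr[OF pr pr])
    show "ref ?D (par (par A B) C)" by (rule glb[OF glb[OF a b] c])
  qed
  show ?thesis using assoc assoc2 by blast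
qed

end
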